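(* If $\xi\in L_G^{*1}(\Omega)$, then $|\xi|\in L_G^{*1}(\Omega)$.
   Context: $\Omega=C_0^d(\mathbb{R}^+)$ is the space of continuous paths $\omega:[0,\infty)\to\mathbb{R}^d$ with $\omega_0=0$, $B$ the canonical process, $\hat{\mathbb{E}}$ the $G$-expectation ($G$ a monotone sublinear function on $d\times d$ symmetric matrices), $L^1_G(\Omega)$ the completion of bounded Lipschitz cylinder functions $\varphi(B_{t_1},\dots,B_{t_n})$ under $\hat{\mathbb{E}}[|\cdot|]$. $\mathcal{P}$ is a weakly compact set of probability measures representing $\hat{\mathbb{E}}$, $\hat{\mathbb{E}}[X]=\sup_{P\in\mathcal{P}}E_P[X]$ for Borel $X$, $c(A)=\sup_{P\in\mathcal{P}}P(A)$, q.s. = outside a capacity-zero set. $\mathbb{L}^1(\Omega)$ = Borel $[-\infty,\infty]$-valued $X$ with $\hat{\mathbb{E}}[|X|]<\infty$; $L_G^{1^*}(\Omega)=\{X\in\mathbb{L}^1(\Omega):\exists X_n\in L^1_G(\Omega),X_n\downarrow X\text{ q.s.}\}$; $L_G^{*1}(\Omega)=\{X-Y:X,Y\in L_G^{1^*}(\Omega)\}$. *)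

theory Defs
  imports "HOL-Probability.Probability"
begin

text \<open>Canonical path space: continuous paths on [0,\<infinity>) in R^d starting at 0
  (extended by 0 on negative times so that a path is determined by its values on [0,\<infinity>)).\<close>
definition Omega :: "(real \<Rightarrow> real^'d) set" where
  "Omega = {\<omega>. continuous_on {0..} \<omega> \<and> \<omega> 0 = 0 \<and> (\<forall>t<0. \<omega> t = 0)}"

definition OmegaM :: "(real \<Rightarrow> real^'d) measure" where
  "OmegaM = sigma Omega {{\<omega>\<in>Omega. \<omega> t \<in> A} | t A. 0 \<le> t \<and> open A}"

text \<open>Standing assumption on the family of probability measures representing the
  sublinear expectation.\<close>
definition admissible_family :: "(real \<Rightarrow> real^'d) measure set \<Rightarrow> bool" where
  "admissible_family \<P> \<longleftrightarrow> \<P> \<noteq> {} \<and>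
     (\<forall>P\<in>\<P>. prob_space P \<and> sets P = sets (OmegaM :: (real \<Rightarrow> real^'d) measure))"

definition EG_abs :: "(real \<Rightarrow> real^'d) measure set \<Rightarrow> ((real \<Rightarrow> real^'d) \<Rightarrow> ereal) \<Rightarrow> ennreal" where
  "EG_abs \<P> X = (SUP P\<in>\<P>. \<integral>\<^sup>+ \<omega>. e2ennreal \<bar>X \<omega>\<bar> \<partial>P)"

definition qs :: "(real \<Rightarrow> real^'d) measure set \<Rightarrow> ((real \<Rightarrow> real^'d) \<Rightarrow> bool) \<Rightarrow> bool" where
  "qs \<P> Q \<longleftrightarrow> (\<exists>N \<in> sets (OmegaM :: (real \<Rightarrow> real^'d) measure).
      (SUP P\<in>\<P>. emeasure P N) = 0 \<and> (\<forall>\<omega>\<in>Omega - N. Q \<omega>))"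

definition lip_cyl :: "((real \<Rightarrow> real^'d) \<Rightarrow> real) set" where
  "lip_cyl = {X. \<exists>(n::nat) (t::nat \<Rightarrow> real) (\<phi>::(nat \<Rightarrow> real^'d) \<Rightarrow> real) L C.
      (\<forall>i<n. 0 \<le> t i) \<and> (\<forall>x. \<bar>\<phi> x\<bar> \<le> C) \<and>
      (\<forall>x y. \<bar>\<phi> x - \<phi> y\<bar> \<le> L * (\<Sum>i<n. norm (x i - y i))) \<and>
      (\<forall>\<omega>. X \<omega> = \<phi> (\<lambda>i. \<omega> (t i)))}"

text \<open>\<open>L^1_G\<close>: completion of the bounded Lipschitz cylinder functions under \<open>E[|.|]\<close>,
  realised as (real-valued) Borel functions approximable by cylinder functions.\<close>
definition LG1 :: "(real \<Rightarrow> real^'d) measure set \<Rightarrow> ((real \<Rightarrow> real^'d) \<Rightarrow> ereal) set" where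
  "LG1 \<P> = {X. X \<in> borel_measurable (OmegaM :: (real \<Rightarrow> real^'d) measure) \<and>
      (\<forall>\<omega>\<in>Omega. \<bar>X \<omega>\<bar> \<noteq> \<infinity>) \<and>
      (\<exists>\<phi>::nat \<Rightarrow> (real \<Rightarrow> real^'d) \<Rightarrow> real. (\<forall>n. \<phi> n \<in> lip_cyl) \<and>
         (\<lambda>n. EG_abs \<P> (\<lambda>\<omega>. X \<omega> - ereal (\<phi> n \<omega>))) \<longlonglongrightarrow> 0)}"

definition L1 :: "(real \<Rightarrow> real^'d) measure set \<Rightarrow> ((real \<Rightarrow> real^'d) \<Rightarrow> ereal) set" where
  "L1 \<P> = {X. X \<in> borel_measurable (OmegaM :: (real \<Rightarrow> real^'d) measure) \<and> EG_abs \<P> X < \<infinity>}"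

definition LG1_star :: "(real \<Rightarrow> real^'d) measure set \<Rightarrow> ((real \<Rightarrow> real^'d) \<Rightarrow> ereal) set" where
  "LG1_star \<P> = {X. X \<in> L1 \<P> \<and> (\<exists>Xn. (\<forall>n. Xn n \<in> LG1 \<P>) \<and>
      qs \<P> (\<lambda>\<omega>. (\<forall>n. Xn (Suc n) \<omega> \<le> Xn n \<omega>) \<and> (\<lambda>n. Xn n \<omega>) \<longlonglongrightarrow> X \<omega>))}"

definition LG_star1 :: "(real \<Rightarrow> real^'d) measure set \<Rightarrow> ((real \<Rightarrow> real^'d) \<Rightarrow> ereal) set" where
  "LG_star1 \<P> = {\<xi>. \<exists>X\<in>LG1_star \<P>. \<exists>Y\<in>LG1_star \<P>. \<forall>\<omega>\<in>Omega. \<xi> \<omega> = X \<omega> - Y \<omega>}"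

end

theory Submission
  imports Defs
begin

lemma space_OmegaM: "space (OmegaM :: (real \<Rightarrow> real^'d) measure) = Omega"
  unfolding OmegaM_def by (rule space_measure_of) auto

lemma e2ennreal_add_nonneg: "0 \<le> a \<Longrightarrow> 0 \<le> b \<Longrightarrow> e2ennreal (a + b) = e2ennreal a + e2ennreal b"
  by (metis enn2ereal_e2ennreal e2ennreal_enn2ereal plus_ennreal.rep_eq)

lemma sum_split_nat: "sum f {..<n+m} = sum f {..<n} + sum (\<lambda>i. f (i+n)) {..<m}" for f :: "nat \<Rightarrow> real"
  by (induction m) (auto simp: add.commute)

lemma EG_abs_le:
  fixes X Y Z :: "(real \<Rightarrow> real^'d) \<Rightarrow> ereal"
  assumes adm: "admissible_family \<P>"
    and m: "X \<in> borel_measurable OmegaM" "Y \<in> borel_measurable OmegaM" "Z \<in> borel_measurable OmegaM"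
    and le: "\<And>\<omega>. \<omega> \<in> Omega \<Longrightarrow> \<bar>Z \<omega>\<bar> \<le> \<bar>X \<omega>\<bar> + \<bar>Y \<omega>\<bar>"
  shows "EG_abs \<P> Z \<le> EG_abs \<P> X + EG_abs \<P> Y"
  unfolding EG_abs_def
proof (rule SUP_least)
  fix P assume P: "P \<in> \<P>"
  then have sP: "sets P = sets (OmegaM :: (real \<Rightarrow> real^'d) measure)" using adm by (auto simp: admissible_family_def)
  then have spP: "space P = Omega" using space_OmegaM sets_eq_imp_space_eq by metis
  have mP: "F \<in> borel_measurable P" if "F \<in> borel_measurable OmegaM" for F :: "_ \<Rightarrow> ereal"
    using that measurable_cong_sets[OF sP refl] by blast
  have mX: "(\<lambda>\<omega>. e2ennreal \<bar>X \<omega>\<bar>) \<in> borel_measurable P" using mP[OF m(1)] by measurable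
  have mY: "(\<lambda>\<omega>. e2ennreal \<bar>Y \<omega>\<bar>) \<in> borel_measurable P" using mP[OF m(2)] by measurable
  have "(\<integral>\<^sup>+ \<omega>. e2ennreal \<bar>Z \<omega>\<bar> \<partial>P) \<le> (\<integral>\<^sup>+ \<omega>. e2ennreal \<bar>X \<omega>\<bar> + e2ennreal \<bar>Y \<omega>\<bar> \<partial>P)"
    apply (rule nn_integral_mono)
    using le by (auto simp: spP e2ennreal_add_nonneg[symmetric] intro!: e2ennreal_mono)
  also have "\<dots> = (\<integral>\<^sup>+ \<omega>. e2ennreal \<bar>X \<omega>\<bar> \<partial>P) + (\<integral>\<^sup>+ \<omega>. e2ennreal \<bar>Y \<omega>\<bar> \<partial>P)"
    by (rule nn_integral_add[OF mX mY])
  also have "\<dots> \<le> (SUP P\<in>\<P>. \<integral>\<^sup>+ \<omega>. e2ennreal \<bar>X \<omega>\<bar> \<partial>P) + (SUP P\<in>\<P>. \<integral>\<^sup>+ \<omega>. e2ennreal \<bar>Y \<omega>\<bar> \<partial>P)"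
    by (intro add_mono SUP_upper P)
  finally show "(\<integral>\<^sup>+ \<omega>. e2ennreal \<bar>Z \<omega>\<bar> \<partial>P) \<le> \<dots>" .
qed

lemma qs_conj:
  fixes \<P> :: "(real \<Rightarrow> real^'d) measure set"
  assumes adm: "admissible_family \<P>" and "qs \<P> A" "qs \<P> B"
  shows "qs \<P> (\<lambda>\<omega>. A \<omega> \<and> B \<omega>)"
proof -
  obtain N1 where N1: "N1 \<in> sets (OmegaM :: (real \<Rightarrow> real^'d) measure)" "(SUP P\<in>\<P>. emeasure P N1) = 0" "\<forall>\<omega>\<in>Omega - N1. A \<omega>"
    using assms(2) unfolding qs_def by blast
  obtain N2 where N2: "N2 \<in> sets (OmegaM :: (real \<Rightarrow> real^'d) measure)" "(SUP P\<in>\<P>. emeasure P N2) = 0" "\<forall>\<omega>\<in>Omega - N2. B \<omega>"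
    using assms(3) unfolding qs_def by blast
  have "(SUP P\<in>\<P>. emeasure P (N1 \<union> N2)) = 0"
  proof -
    have "emeasure P (N1 \<union> N2) = 0" if P: "P \<in> \<P>" for P
    proof -
      have sP: "sets P = sets (OmegaM :: (real \<Rightarrow> real^'d) measure)" using adm P by (auto simp: admissible_family_def)
      have "emeasure P N1 = 0" "emeasure P N2 = 0"
        using N1(2) N2(2) P by (metis SUP_upper le_zero_eq)+
      moreover have "emeasure P (N1 \<union> N2) \<le> emeasure P N1 + emeasure P N2"
        by (rule emeasure_subadditive) (use N1 N2 sP in auto)
      ultimately show ?thesis by simp
    qed
    then show ?thesis by (intro antisym SUP_least) auto
  qed
  moreover have "N1 \<union> N2 \<in> sets (OmegaM :: (real \<Rightarrow> real^'d) measure)" using N1 N2 by auto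
  ultimately show ?thesis unfolding qs_def using N1(3) N2(3) by blast
qed

lemma lip_cyl_comb:
  fixes g :: "real \<Rightarrow> real \<Rightarrow> real"
  assumes gb: "\<And>a b. \<bar>g a b\<bar> \<le> \<bar>a\<bar> + \<bar>b\<bar>"
    and gl: "\<And>a b c d. \<bar>g a b - g c d\<bar> \<le> \<bar>a - c\<bar> + \<bar>b - d\<bar>"
    and X: "X \<in> (lip_cyl :: ((real \<Rightarrow> real^'d) \<Rightarrow> real) set)" and Y: "Y \<in> lip_cyl"
  shows "(\<lambda>\<omega>. g (X \<omega>) (Y \<omega>)) \<in> lip_cyl"
proof -
  obtain n :: nat and t :: "nat \<Rightarrow> real" and \<phi> :: "(nat \<Rightarrow> real^'d) \<Rightarrow> real" and L1 C1 :: real where 1: "\<forall>i<n. 0 \<le> t i" "\<forall>x. \<bar>\<phi> x\<bar> \<le> C1"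
      "\<forall>x y. \<bar>\<phi> x - \<phi> y\<bar> \<le> L1 * (\<Sum>i<n. norm (x i - y i))" "\<forall>\<omega>. X \<omega> = \<phi> (\<lambda>i. \<omega> (t i))"
    using X unfolding lip_cyl_def by auto
  obtain m :: nat and s :: "nat \<Rightarrow> real" and \<psi> :: "(nat \<Rightarrow> real^'d) \<Rightarrow> real" and L2 C2 :: real where 2: "\<forall>i<m. 0 \<le> s i" "\<forall>x. \<bar>\<psi> x\<bar> \<le> C2"
      "\<forall>x y. \<bar>\<psi> x - \<psi> y\<bar> \<le> L2 * (\<Sum>i<m. norm (x i - y i))" "\<forall>\<omega>. Y \<omega> = \<psi> (\<lambda>i. \<omega> (s i))"
    using Y unfolding lip_cyl_def by auto
  define u where "u i = (if i < n then t i else s (i - n))" for i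
  define \<Phi> where "\<Phi> x = g (\<phi> x) (\<psi> (\<lambda>i. x (i + n)))" for x :: "nat \<Rightarrow> real^'d"
  have u0: "\<forall>i<n+m. 0 \<le> u i" using 1(1) 2(1) by (auto simp: u_def)
  have bd: "\<forall>x. \<bar>\<Phi> x\<bar> \<le> C1 + C2"
    using gb 1(2) 2(2) unfolding \<Phi>_def by (meson add_mono order_trans)
  have S1: "(\<Sum>i<n. norm (x i - y i)) \<le> (\<Sum>i<n+m. norm (x i - y i))" for x y :: "nat \<Rightarrow> real^'d"
    using sum_split_nat[of "\<lambda>i. norm (x i - y i)" n m] by (simp add: sum_nonneg)
  have S2: "(\<Sum>i<m. norm (x (i+n) - y (i+n))) \<le> (\<Sum>i<n+m. norm (x i - y i))" for x y :: "nat \<Rightarrow> real^'d"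
    using sum_split_nat[of "\<lambda>i. norm (x i - y i)" n m] by (simp add: sum_nonneg)
  have lip: "\<forall>x y. \<bar>\<Phi> x - \<Phi> y\<bar> \<le> (max L1 0 + max L2 0) * (\<Sum>i<n+m. norm (x i - y i))"
  proof (intro allI)
    fix x y :: "nat \<Rightarrow> real^'d"
    let ?S = "\<Sum>i<n+m. norm (x i - y i)"
    have S0: "0 \<le> ?S" by (simp add: sum_nonneg)
    have a: "\<bar>\<phi> x - \<phi> y\<bar> \<le> max L1 0 * ?S"
    proof -
      have "\<bar>\<phi> x - \<phi> y\<bar> \<le> L1 * (\<Sum>i<n. norm (x i - y i))" using 1(3) by blast
      also have "\<dots> \<le> max L1 0 * (\<Sum>i<n. norm (x i - y i))"
        by (intro mult_right_mono) (auto simp: sum_nonneg)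
      also have "\<dots> \<le> max L1 0 * ?S" by (intro mult_left_mono S1) auto
      finally show ?thesis .
    qed
    have b: "\<bar>\<psi> (\<lambda>i. x (i + n)) - \<psi> (\<lambda>i. y (i + n))\<bar> \<le> max L2 0 * ?S"
    proof -
      have "\<bar>\<psi> (\<lambda>i. x (i + n)) - \<psi> (\<lambda>i. y (i + n))\<bar> \<le> L2 * (\<Sum>i<m. norm (x (i+n) - y (i+n)))"
        using 2(3) by blast
      also have "\<dots> \<le> max L2 0 * (\<Sum>i<m. norm (x (i+n) - y (i+n)))"
        by (intro mult_right_mono) (auto simp: sum_nonneg)
      also have "\<dots> \<le> max L2 0 * ?S" by (intro mult_left_mono S2) auto
      finally show ?thesis .
    qed
    show "\<bar>\<Phi> x - \<Phi> y\<bar> \<le> (max L1 0 + max L2 0) * ?S"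
      using gl[of "\<phi> x" "\<psi> (\<lambda>i. x (i + n))" "\<phi> y" "\<psi> (\<lambda>i. y (i + n))"] a b
      unfolding \<Phi>_def by (simp add: distrib_right)
  qed
  have rep: "\<forall>\<omega>. g (X \<omega>) (Y \<omega>) = \<Phi> (\<lambda>i. \<omega> (u i))"
  proof
    fix \<omega> :: "real \<Rightarrow> real^'d"
    have "\<bar>\<phi> (\<lambda>i. \<omega> (t i)) - \<phi> (\<lambda>i. \<omega> (u i))\<bar> \<le> L1 * (\<Sum>i<n. norm (\<omega> (t i) - \<omega> (u i)))"
      using 1(3) by blast
    also have "(\<Sum>i<n. norm (\<omega> (t i) - \<omega> (u i))) = 0" by (simp add: u_def)
    finally have e1: "\<phi> (\<lambda>i. \<omega> (t i)) = \<phi> (\<lambda>i. \<omega> (u i))" by simp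
    have e2: "(\<lambda>i. \<omega> (u (i + n))) = (\<lambda>i. \<omega> (s i))" by (simp add: u_def)
    show "g (X \<omega>) (Y \<omega>) = \<Phi> (\<lambda>i. \<omega> (u i))"
      unfolding \<Phi>_def using e2 e1 1(4) 2(4) by simp
  qed
  show ?thesis unfolding lip_cyl_def
    using u0 bd lip rep by blast
qed

lemma coord_measurable:
  "(\<lambda>\<omega>::real \<Rightarrow> real^'d. \<omega> s) \<in> borel_measurable OmegaM"
proof (rule borel_measurableI)
  fix S :: "(real^'d) set" assume S: "open S"
  show "(\<lambda>\<omega>. \<omega> s) -` S \<inter> space OmegaM \<in> sets OmegaM"
  proof (cases "0 \<le> s")
    case True
    have "(\<lambda>\<omega>::real \<Rightarrow> real^'d. \<omega> s) -` S \<inter> space OmegaM = {\<omega>\<in>Omega. \<omega> s \<in> S}"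
      by (auto simp: space_OmegaM)
    also have "\<dots> \<in> sets OmegaM" unfolding OmegaM_def
      by (subst sets_measure_of) (use True S in \<open>auto intro!: sigma_sets.Basic\<close>)
    finally show ?thesis .
  next
    case False
    have "(\<lambda>\<omega>::real \<Rightarrow> real^'d. \<omega> s) -` S \<inter> space OmegaM = (if 0 \<in> S then space OmegaM else {})"
      using False by (auto simp: space_OmegaM Omega_def)
    then show ?thesis by simp
  qed
qed

lemma lip_fun_continuous:
  fixes \<phi> :: "(nat \<Rightarrow> real^'d) \<Rightarrow> real"
  assumes L: "\<forall>x y. \<bar>\<phi> x - \<phi> y\<bar> \<le> L * (\<Sum>i<n. norm (x i - y i))"
  shows "continuous_on UNIV \<phi>"
proof -
  have "(\<phi> \<longlongrightarrow> \<phi> y) (at y)" for y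
  proof -
    have C: "((\<lambda>x. x i) \<longlongrightarrow> y i) (at y)" for i
      using continuous_on_product_coordinates[of i, where 'b="real^'d"] by (simp add: continuous_on_def)
    have D: "((\<lambda>x. L * (\<Sum>i<n. norm (x i - y i))) \<longlongrightarrow> L * (\<Sum>i<n. norm (y i - y i))) (at y)"
      by (intro tendsto_intros C)
    have "((\<lambda>x. \<phi> x - \<phi> y) \<longlongrightarrow> 0) (at y)"
      by (rule Lim_null_comparison[where g="\<lambda>x. L * (\<Sum>i<n. norm (x i - y i))"])
        (use L D in auto)
    then show ?thesis by (simp add: LIM_zero_iff)
  qed
  then show ?thesis by (simp add: continuous_on_def)
qed

lemma lip_cyl_measurable:
  assumes "X \<in> (lip_cyl :: ((real \<Rightarrow> real^'d) \<Rightarrow> real) set)"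
  shows "X \<in> borel_measurable OmegaM"
proof -
  obtain n :: nat and t :: "nat \<Rightarrow> real" and \<phi> :: "(nat \<Rightarrow> real^'d) \<Rightarrow> real" and L C :: real where 1:
      "\<forall>x y. \<bar>\<phi> x - \<phi> y\<bar> \<le> L * (\<Sum>i<n. norm (x i - y i))" "\<forall>\<omega>. X \<omega> = \<phi> (\<lambda>i. \<omega> (t i))"
    using assms unfolding lip_cyl_def by auto
  have T: "(\<lambda>\<omega>::real \<Rightarrow> real^'d. \<lambda>i. \<omega> (t i)) \<in> OmegaM \<rightarrow>\<^sub>M (Pi\<^sub>M UNIV (\<lambda>_. borel))"
    by (rule measurable_PiM_single'[where f="\<lambda>i \<omega>. \<omega> (t i)"]) (auto intro: coord_measurable)
  then have T': "(\<lambda>\<omega>::real \<Rightarrow> real^'d. \<lambda>i. \<omega> (t i)) \<in> OmegaM \<rightarrow>\<^sub>M (borel :: (nat \<Rightarrow> real^'d) measure)"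
    using measurable_cong_sets[OF refl sets_PiM_equal_borel] by blast
  have "\<phi> \<in> borel_measurable borel"
    by (rule borel_measurable_continuous_onI, rule lip_fun_continuous[OF 1(1)])
  moreover have "X = \<phi> \<circ> (\<lambda>\<omega>::real \<Rightarrow> real^'d. \<lambda>i. \<omega> (t i))" using 1(2) by (auto simp: o_def)
  ultimately show ?thesis using measurable_comp[OF T'] by metis
qed

lemma LG1_comb:
  fixes \<P> :: "(real \<Rightarrow> real^'d) measure set" and g :: "real \<Rightarrow> real \<Rightarrow> real"
    and G :: "ereal \<Rightarrow> ereal \<Rightarrow> ereal" and X Y :: "(real \<Rightarrow> real^'d) \<Rightarrow> ereal"
  assumes adm: "admissible_family \<P>"
    and gb: "\<And>a b. \<bar>g a b\<bar> \<le> \<bar>a\<bar> + \<bar>b\<bar>"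
    and gl: "\<And>a b c d. \<bar>g a b - g c d\<bar> \<le> \<bar>a - c\<bar> + \<bar>b - d\<bar>"
    and Gg: "\<And>a b. G (ereal a) (ereal b) = ereal (g a b)"
    and Gm: "(\<lambda>\<omega>. G (X \<omega>) (Y \<omega>)) \<in> borel_measurable OmegaM"
    and X: "X \<in> LG1 \<P>" and Y: "Y \<in> LG1 \<P>"
  shows "(\<lambda>\<omega>. G (X \<omega>) (Y \<omega>)) \<in> LG1 \<P>"
proof -
  have Xm: "X \<in> borel_measurable OmegaM" and Xf: "\<forall>\<omega>\<in>Omega. \<bar>X \<omega>\<bar> \<noteq> \<infinity>"
    using X unfolding LG1_def by auto
  obtain \<phi> :: "nat \<Rightarrow> (real \<Rightarrow> real^'d) \<Rightarrow> real" where \<phi>: "\<forall>n. \<phi> n \<in> lip_cyl" "(\<lambda>n. EG_abs \<P> (\<lambda>\<omega>. X \<omega> - ereal (\<phi> n \<omega>))) \<longlonglongrightarrow> 0"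
    using X unfolding LG1_def by auto
  have Ym: "Y \<in> borel_measurable OmegaM" and Yf: "\<forall>\<omega>\<in>Omega. \<bar>Y \<omega>\<bar> \<noteq> \<infinity>"
    using Y unfolding LG1_def by auto
  obtain \<psi> :: "nat \<Rightarrow> (real \<Rightarrow> real^'d) \<Rightarrow> real" where \<psi>: "\<forall>n. \<psi> n \<in> lip_cyl" "(\<lambda>n. EG_abs \<P> (\<lambda>\<omega>. Y \<omega> - ereal (\<psi> n \<omega>))) \<longlonglongrightarrow> 0"
    using Y unfolding LG1_def by auto
  define \<Phi> where "\<Phi> n \<omega> = g (\<phi> n \<omega>) (\<psi> n \<omega>)" for n \<omega>
  have \<Phi>l: "\<forall>n. \<Phi> n \<in> lip_cyl"
    unfolding \<Phi>_def using lip_cyl_comb[OF gb gl] \<phi>(1) \<psi>(1) by blast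
  have fin: "\<forall>\<omega>\<in>Omega. \<bar>G (X \<omega>) (Y \<omega>)\<bar> \<noteq> \<infinity>"
  proof
    fix \<omega> :: "real \<Rightarrow> real^'d" assume "\<omega> \<in> Omega"
    then obtain x y where "X \<omega> = ereal x" "Y \<omega> = ereal y" using Xf Yf by (cases "X \<omega>"; cases "Y \<omega>") auto
    then show "\<bar>G (X \<omega>) (Y \<omega>)\<bar> \<noteq> \<infinity>" by (simp add: Gg)
  qed
  have le: "EG_abs \<P> (\<lambda>\<omega>. G (X \<omega>) (Y \<omega>) - ereal (\<Phi> n \<omega>)) \<le>
      EG_abs \<P> (\<lambda>\<omega>. X \<omega> - ereal (\<phi> n \<omega>)) + EG_abs \<P> (\<lambda>\<omega>. Y \<omega> - ereal (\<psi> n \<omega>))" for n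
  proof (rule EG_abs_le[OF adm])
    have [measurable]: "\<phi> n \<in> borel_measurable OmegaM" "\<psi> n \<in> borel_measurable OmegaM" "\<Phi> n \<in> borel_measurable OmegaM"
      using \<phi>(1) \<psi>(1) \<Phi>l lip_cyl_measurable by blast+
    note [measurable] = Xm Ym Gm
    show "(\<lambda>\<omega>. X \<omega> - ereal (\<phi> n \<omega>)) \<in> borel_measurable OmegaM" by measurable
    show "(\<lambda>\<omega>. Y \<omega> - ereal (\<psi> n \<omega>)) \<in> borel_measurable OmegaM" by measurable
    show "(\<lambda>\<omega>. G (X \<omega>) (Y \<omega>) - ereal (\<Phi> n \<omega>)) \<in> borel_measurable OmegaM" by measurable
    fix \<omega> :: "real \<Rightarrow> real^'d" assume "\<omega> \<in> Omega"
    then obtain x y where xy: "X \<omega> = ereal x" "Y \<omega> = ereal y" using Xf Yf by (cases "X \<omega>"; cases "Y \<omega>") auto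
    show "\<bar>G (X \<omega>) (Y \<omega>) - ereal (\<Phi> n \<omega>)\<bar> \<le> \<bar>X \<omega> - ereal (\<phi> n \<omega>)\<bar> + \<bar>Y \<omega> - ereal (\<psi> n \<omega>)\<bar>"
      unfolding xy Gg \<Phi>_def ereal_minus(1) abs_ereal.simps(1) plus_ereal.simps(1) ereal_less_eq(3)
      by (rule gl)
  qed
  have "(\<lambda>n. EG_abs \<P> (\<lambda>\<omega>. X \<omega> - ereal (\<phi> n \<omega>)) + EG_abs \<P> (\<lambda>\<omega>. Y \<omega> - ereal (\<psi> n \<omega>))) \<longlonglongrightarrow> 0 + 0"
    by (intro tendsto_add \<phi>(2) \<psi>(2))
  then have H: "(\<lambda>n. EG_abs \<P> (\<lambda>\<omega>. X \<omega> - ereal (\<phi> n \<omega>)) + EG_abs \<P> (\<lambda>\<omega>. Y \<omega> - ereal (\<psi> n \<omega>))) \<longlonglongrightarrow> 0"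
    by simp
  have "(\<lambda>n. EG_abs \<P> (\<lambda>\<omega>. G (X \<omega>) (Y \<omega>) - ereal (\<Phi> n \<omega>))) \<longlonglongrightarrow> 0"
    by (rule tendsto_sandwich[OF _ _ tendsto_const H]) (use le in \<open>auto intro!: always_eventually\<close>)
  then show ?thesis unfolding LG1_def using Gm fin \<Phi>l by blast
qed

lemma qs_mono:
  assumes "qs \<P> A" "\<And>\<omega>. A \<omega> \<Longrightarrow> B \<omega>"
  shows "qs \<P> B"
  using assms unfolding qs_def by blast

lemma LG1_star_comb:
  fixes \<P> :: "(real \<Rightarrow> real^'d) measure set" and g :: "real \<Rightarrow> real \<Rightarrow> real"
    and G :: "ereal \<Rightarrow> ereal \<Rightarrow> ereal" and X Y :: "(real \<Rightarrow> real^'d) \<Rightarrow> ereal"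
  assumes adm: "admissible_family \<P>"
    and gb: "\<And>a b. \<bar>g a b\<bar> \<le> \<bar>a\<bar> + \<bar>b\<bar>"
    and gl: "\<And>a b c d. \<bar>g a b - g c d\<bar> \<le> \<bar>a - c\<bar> + \<bar>b - d\<bar>"
    and Gg: "\<And>a b. G (ereal a) (ereal b) = ereal (g a b)"
    and Gb: "\<And>a b. \<bar>G a b\<bar> \<le> \<bar>a\<bar> + \<bar>b\<bar>"
    and Gmono: "\<And>a b c d. a \<le> c \<Longrightarrow> b \<le> d \<Longrightarrow> G a b \<le> G c d"
    and Gt: "\<And>f h a b. f \<longlonglongrightarrow> a \<Longrightarrow> h \<longlonglongrightarrow> b \<Longrightarrow> (\<lambda>n. G (f n) (h n)) \<longlonglongrightarrow> G a b"
    and Gm: "\<And>U V :: (real \<Rightarrow> real^'d) \<Rightarrow> ereal. U \<in> borel_measurable OmegaM \<Longrightarrow> V \<in> borel_measurable OmegaM \<Longrightarrow>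
        (\<lambda>\<omega>. G (U \<omega>) (V \<omega>)) \<in> borel_measurable OmegaM"
    and X: "X \<in> LG1_star \<P>" and Y: "Y \<in> LG1_star \<P>"
  shows "(\<lambda>\<omega>. G (X \<omega>) (Y \<omega>)) \<in> LG1_star \<P>"
proof -
  have XL: "X \<in> L1 \<P>" and YL: "Y \<in> L1 \<P>" using X Y unfolding LG1_star_def by auto
  obtain Xn where Xn: "\<forall>n. Xn n \<in> LG1 \<P>"
      "qs \<P> (\<lambda>\<omega>. (\<forall>n. Xn (Suc n) \<omega> \<le> Xn n \<omega>) \<and> (\<lambda>n. Xn n \<omega>) \<longlonglongrightarrow> X \<omega>)"
    using X unfolding LG1_star_def by auto
  obtain Yn where Yn: "\<forall>n. Yn n \<in> LG1 \<P>"
      "qs \<P> (\<lambda>\<omega>. (\<forall>n. Yn (Suc n) \<omega> \<le> Yn n \<omega>) \<and> (\<lambda>n. Yn n \<omega>) \<longlonglongrightarrow> Y \<omega>)"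
    using Y unfolding LG1_star_def by auto
  have Xm: "X \<in> borel_measurable OmegaM" and Ym: "Y \<in> borel_measurable OmegaM"
    using XL YL unfolding L1_def by auto
  have "EG_abs \<P> (\<lambda>\<omega>. G (X \<omega>) (Y \<omega>)) \<le> EG_abs \<P> X + EG_abs \<P> Y"
    by (rule EG_abs_le[OF adm Xm Ym Gm[OF Xm Ym] Gb])
  also have "\<dots> < \<infinity>" using XL YL unfolding L1_def by (simp add: ennreal_add_less_top)
  finally have L: "(\<lambda>\<omega>. G (X \<omega>) (Y \<omega>)) \<in> L1 \<P>" unfolding L1_def using Gm[OF Xm Ym] by blast
  have Zn: "\<forall>n. (\<lambda>\<omega>. G (Xn n \<omega>) (Yn n \<omega>)) \<in> LG1 \<P>"
  proof
    fix n
    have "Xn n \<in> borel_measurable OmegaM" "Yn n \<in> borel_measurable OmegaM"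
      using Xn(1) Yn(1) unfolding LG1_def by auto
    then show "(\<lambda>\<omega>. G (Xn n \<omega>) (Yn n \<omega>)) \<in> LG1 \<P>"
      by (intro LG1_comb[OF adm gb gl Gg] Gm) (use Xn(1) Yn(1) in auto)
  qed
  have "qs \<P> (\<lambda>\<omega>. (\<forall>n. G (Xn (Suc n) \<omega>) (Yn (Suc n) \<omega>) \<le> G (Xn n \<omega>) (Yn n \<omega>)) \<and>
      (\<lambda>n. G (Xn n \<omega>) (Yn n \<omega>)) \<longlonglongrightarrow> G (X \<omega>) (Y \<omega>))"
    by (rule qs_mono[OF qs_conj[OF adm Xn(2) Yn(2)]]) (auto intro: Gmono Gt)
  then show ?thesis unfolding LG1_star_def mem_Collect_eq
    by (intro conjI L exI[where x="\<lambda>n \<omega>. G (Xn n \<omega>) (Yn n \<omega>)"]) (use Zn in simp_all)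
qed

lemma max_lip: "\<bar>max a b - max c d\<bar> \<le> \<bar>a - c\<bar> + \<bar>b - d\<bar>" for a b c d :: real
  by (auto simp: max_def abs_if)
lemma min_lip: "\<bar>min a b - min c d\<bar> \<le> \<bar>a - c\<bar> + \<bar>b - d\<bar>" for a b c d :: real
  by (auto simp: min_def abs_if)
lemma max_bd: "\<bar>max a b\<bar> \<le> \<bar>a\<bar> + \<bar>b\<bar>" for a b :: real
  by (auto simp: max_def abs_if)
lemma min_bd: "\<bar>min a b\<bar> \<le> \<bar>a\<bar> + \<bar>b\<bar>" for a b :: real
  by (auto simp: min_def abs_if)
lemma max_bd_e: "\<bar>max a b\<bar> \<le> \<bar>a\<bar> + \<bar>b\<bar>" for a b :: ereal
  by (cases a; cases b) (auto simp: max_def)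
lemma min_bd_e: "\<bar>min a b\<bar> \<le> \<bar>a\<bar> + \<bar>b\<bar>" for a b :: ereal
  by (cases a; cases b) (auto simp: min_def)

theorem proposition3p17:
  fixes \<P> :: "(real \<Rightarrow> real^'d) measure set"
    and \<xi> :: "(real \<Rightarrow> real^'d) \<Rightarrow> ereal"
  assumes "admissible_family \<P>"
    and "\<xi> \<in> LG_star1 \<P>"
  shows "(\<lambda>\<omega>. \<bar>\<xi> \<omega>\<bar>) \<in> LG_star1 \<P>"
proof -
  obtain X Y where X: "X \<in> LG1_star \<P>" and Y: "Y \<in> LG1_star \<P>" and xi: "\<forall>\<omega>\<in>Omega. \<xi> \<omega> = X \<omega> - Y \<omega>"
    using assms(2) unfolding LG_star1_def by blast
  have M: "(\<lambda>\<omega>. max (X \<omega>) (Y \<omega>)) \<in> LG1_star \<P>"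
    by (rule LG1_star_comb[OF assms(1) max_bd max_lip _ max_bd_e _ tendsto_max _ X Y])
      (auto simp: max_def intro: order_trans)
  have m: "(\<lambda>\<omega>. min (X \<omega>) (Y \<omega>)) \<in> LG1_star \<P>"
    by (rule LG1_star_comb[OF assms(1) min_bd min_lip _ min_bd_e _ tendsto_min _ X Y])
      (auto simp: min_def intro: order_trans)
  have "\<forall>\<omega>\<in>Omega. \<bar>\<xi> \<omega>\<bar> = max (X \<omega>) (Y \<omega>) - min (X \<omega>) (Y \<omega>)"
  proof
    fix \<omega> :: "real \<Rightarrow> real^'d" assume "\<omega> \<in> Omega"
    then have "\<xi> \<omega> = X \<omega> - Y \<omega>" using xi by blast
    moreover have "\<bar>(a::ereal) - b\<bar> = max a b - min a b" for a b
      by (cases a; cases b) (auto simp: max_def min_def)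
    ultimately show "\<bar>\<xi> \<omega>\<bar> = max (X \<omega>) (Y \<omega>) - min (X \<omega>) (Y \<omega>)" by simp
  qed
  then show ?thesis unfolding LG_star1_def mem_Collect_eq
    by (intro bexI[OF _ M] bexI[OF _ m])
qed

end
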